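(* Let $\gamma > 1$ and let $I$ be a $\gamma$-stable instance of the metric Steiner tree problem with optimal Steiner tree $\mathrm{OPT}$. Let $H$ be a subgraph of $\mathrm{OPT}$ with at least one edge, let $ab$ be an edge of $H$, and let $c \in V(\mathrm{OPT}) \setminus V(H)$ satisfy $w_{bc} < \gamma(\gamma - 1) w_{ab}$. Then $w_{bc} < \frac{w_{ab}}{\gamma - 1}$ and $w_{ab} < \frac{w_{bc}}{\gamma - 1}$.
   Context: An instance of the metric Steiner tree problem consists of a finite set $V$ of points of a metric space with metric $d$, a set $T \subseteq V$ of terminals, and the complete graph on $V$ with edge weights $w_{uv} = d(u,v)$. Points of $V \setminus T$ are Steiner points. A Steiner tree is a tree in this complete graph whose vertex set contains all of $T$; its weight is the sum of its edge weights. For $\gamma > 1$, the instance is $\gamma$-stable if it has a minimum-weight Steiner tree $\mathrm{OPT}$ such that for every $w' : V \times V \to \mathbb{R}_{\ge 0}$ with $w_{uv} \le w'_{uv} \le \gamma w_{uv}$ for all $u,v$, every minimum-weight Steiner tree with respect to $w'$ equals $\mathrm{OPT}$. $V(\mathrm{OPT})$ and $V(H)$ denote vertex sets. *)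

theory Defs
  imports Complex_Main
begin

definition metric_on :: "'a set \<Rightarrow> ('a \<Rightarrow> 'a \<Rightarrow> real) \<Rightarrow> bool" where
  "metric_on V d \<longleftrightarrow>
     (\<forall>u\<in>V. \<forall>v\<in>V. d u v \<ge> 0 \<and> (d u v = 0 \<longleftrightarrow> u = v) \<and> d u v = d v u) \<and>
     (\<forall>u\<in>V. \<forall>v\<in>V. \<forall>x\<in>V. d u x \<le> d u v + d v x)"

definition edges_of :: "'a set \<Rightarrow> 'a set set" where
  "edges_of S = {{u, v} | u v. u \<in> S \<and> v \<in> S \<and> u \<noteq> v}"

text \<open>The original edge weights w_uv = d(u,v), as a function on (unordered) edges.\<close>
definition w :: "('a \<Rightarrow> 'a \<Rightarrow> real) \<Rightarrow> 'a set \<Rightarrow> real" where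
  "w d e = (SOME x. \<exists>u v. e = {u, v} \<and> x = d u v)"

definition adj :: "'a set set \<Rightarrow> ('a \<times> 'a) set" where
  "adj E = {(x, y). {x, y} \<in> E \<and> x \<noteq> y}"

definition connected_graph :: "'a set \<Rightarrow> 'a set set \<Rightarrow> bool" where
  "connected_graph S E \<longleftrightarrow> (\<forall>u\<in>S. \<forall>v\<in>S. (u, v) \<in> (adj E)\<^sup>*)"

text \<open>Acyclic: no edge lies on a cycle, i.e. removing any edge disconnects its endpoints.\<close>
definition acyclic_graph :: "'a set set \<Rightarrow> bool" where
  "acyclic_graph E \<longleftrightarrow> (\<forall>u v. {u, v} \<in> E \<longrightarrow> (u, v) \<notin> (adj (E - {{u, v}}))\<^sup>*)"

definition is_tree :: "'a set \<Rightarrow> 'a set \<times> 'a set set \<Rightarrow> bool" where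
  "is_tree V t \<longleftrightarrow> (case t of (S, E) \<Rightarrow>
      S \<subseteq> V \<and> S \<noteq> {} \<and> E \<subseteq> edges_of S \<and> connected_graph S E \<and> acyclic_graph E)"

definition steiner_tree :: "'a set \<Rightarrow> 'a set \<Rightarrow> 'a set \<times> 'a set set \<Rightarrow> bool" where
  "steiner_tree V T t \<longleftrightarrow> is_tree V t \<and> T \<subseteq> fst t"

definition tree_weight :: "('a set \<Rightarrow> real) \<Rightarrow> 'a set \<times> 'a set set \<Rightarrow> real" where
  "tree_weight c t = (\<Sum>e\<in>snd t. c e)"

definition min_steiner :: "'a set \<Rightarrow> 'a set \<Rightarrow> ('a set \<Rightarrow> real) \<Rightarrow> 'a set \<times> 'a set set \<Rightarrow> bool" where
  "min_steiner V T c t \<longleftrightarrow> steiner_tree V T t \<and>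
     (\<forall>t'. steiner_tree V T t' \<longrightarrow> tree_weight c t \<le> tree_weight c t')"

definition steiner_instance :: "'a set \<Rightarrow> 'a set \<Rightarrow> ('a \<Rightarrow> 'a \<Rightarrow> real) \<Rightarrow> bool" where
  "steiner_instance V T d \<longleftrightarrow> finite V \<and> T \<subseteq> V \<and> metric_on V d"

definition perturbation :: "real \<Rightarrow> 'a set \<Rightarrow> ('a \<Rightarrow> 'a \<Rightarrow> real) \<Rightarrow> ('a set \<Rightarrow> real) \<Rightarrow> bool" where
  "perturbation \<gamma> V d w' \<longleftrightarrow> (\<forall>e\<in>edges_of V. w d e \<le> w' e \<and> w' e \<le> \<gamma> * w d e)"

definition gamma_stable :: "real \<Rightarrow> 'a set \<Rightarrow> 'a set \<Rightarrow> ('a \<Rightarrow> 'a \<Rightarrow> real) \<Rightarrow> bool" where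
  "gamma_stable \<gamma> V T d \<longleftrightarrow> (\<exists>OPT. min_steiner V T (w d) OPT \<and>
     (\<forall>w'. perturbation \<gamma> V d w' \<longrightarrow> (\<forall>t. min_steiner V T w' t \<longrightarrow> t = OPT)))"

end

theory Submission
  imports Defs
begin

lemma adj_conv: "(adj F)\<inverse> = adj F"
  by (auto simp: adj_def insert_commute)

lemma R_sym: "(x,y) \<in> (adj F)\<^sup>* \<Longrightarrow> (y,x) \<in> (adj F)\<^sup>*"
  by (metis adj_conv rtrancl_converseI)

lemma adj_I: "{x,y} \<in> F \<Longrightarrow> x \<noteq> y \<Longrightarrow> (x,y) \<in> (adj F)\<^sup>*"
  by (auto simp: adj_def)

lemma adj_mono: "F \<subseteq> G \<Longrightarrow> (x,y) \<in> (adj F)\<^sup>* \<Longrightarrow> (x,y) \<in> (adj G)\<^sup>*"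
proof -
  assume "F \<subseteq> G" "(x,y) \<in> (adj F)\<^sup>*"
  moreover have "adj F \<subseteq> adj G" using \<open>F \<subseteq> G\<close> by (auto simp: adj_def)
  ultimately show ?thesis by (meson rtrancl_mono subsetD)
qed

lemma split_path:
  assumes "(x,y) \<in> (adj (insert {p,q} F))\<^sup>*"
  shows "(x,y) \<in> (adj F)\<^sup>* \<or> ((x,p) \<in> (adj F)\<^sup>* \<and> (q,y) \<in> (adj F)\<^sup>*)
         \<or> ((x,q) \<in> (adj F)\<^sup>* \<and> (p,y) \<in> (adj F)\<^sup>*)"
  using assms
proof (induction rule: rtrancl_induct)
  case base
  then show ?case by (rule disjI1) (rule rtrancl.rtrancl_refl)
next
  case (step y z)
  have a: "{y,z} \<in> insert {p,q} F" "y \<noteq> z" using step.hyps(2) unfolding adj_def by auto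
  show ?case
  proof (cases "{y,z} \<in> F")
    case True
    then have "(y,z) \<in> adj F" using a unfolding adj_def by blast
    then show ?thesis using step.IH rtrancl_into_rtrancl[of _ y "adj F" z] by blast
  next
    case False
    then have "{y,z} = {p,q}" using a by blast
    then have "(y = p \<and> z = q) \<or> (y = q \<and> z = p)" by (simp add: doubleton_eq_iff)
    then show ?thesis
    proof
      assume "y = p \<and> z = q"
      then show ?thesis using step.IH by (metis rtrancl.rtrancl_refl)
    next
      assume "y = q \<and> z = p"
      then show ?thesis using step.IH by (metis rtrancl.rtrancl_refl)
    qed
  qed
qed

lemma first_step:
  assumes "F \<subseteq> E" "(c,b) \<in> (adj F)\<^sup>*"
  shows "c = b \<or> (\<exists>x. {b,x} \<in> F \<and> (x,c) \<in> (adj (E - {{b,x}}))\<^sup>*)"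
  using assms(2)
proof (induction rule: converse_rtrancl_induct)
  case base
  then show ?case by simp
next
  case (step c c')
  then have cc: "{c,c'} \<in> F" "c \<noteq> c'" by (auto simp: adj_def)
  show ?case
  proof (cases "c = b")
    case True then show ?thesis by simp
  next
    case cb: False
    show ?thesis
    proof (cases "c' = b")
      case True
      then show ?thesis using cc by (auto simp: insert_commute)
    next
      case False
      then obtain x where x: "{b,x} \<in> F" "(x,c') \<in> (adj (E - {{b,x}}))\<^sup>*" using step.IH by blast
      have "{c',c} \<noteq> {b,x}" using cb False by (auto simp: doubleton_eq_iff)
      then have "{c',c} \<in> E - {{b,x}}" using cc assms(1) by (auto simp: insert_commute)
      then have "(c',c) \<in> (adj (E - {{b,x}}))\<^sup>*" using cc adj_I by metis
      then show ?thesis using x by (meson rtrancl_trans)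
    qed
  qed
qed

lemma edge_facts: "{x,y} \<in> edges_of S \<Longrightarrow> x \<in> S \<and> y \<in> S \<and> x \<noteq> y"
proof -
  assume "{x,y} \<in> edges_of S"
  then obtain u v where uv: "{x,y} = {u,v}" "u \<in> S" "v \<in> S" "u \<noteq> v" unfolding edges_of_def by blast
  then have "(x = u \<and> y = v) \<or> (x = v \<and> y = u)" by (simp add: doubleton_eq_iff)
  then show ?thesis using uv by blast
qed


lemma w_eq:
  assumes "metric_on V d" "x \<in> V" "y \<in> V"
  shows "w d {x,y} = d x y"
proof -
  have ex: "\<exists>u v. {x,y} = {u,v} \<and> d x y = d u v" by blast
  have "\<And>z. (\<exists>u v. {x,y} = {u,v} \<and> z = d u v) \<Longrightarrow> z = d x y"
  proof -
    fix z assume "\<exists>u v. {x,y} = {u,v} \<and> z = d u v"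
    then obtain u v where "{x,y} = {u,v}" "z = d u v" by blast
    then have "(x = u \<and> y = v) \<or> (x = v \<and> y = u)" by (simp add: doubleton_eq_iff)
    then show "z = d x y" using assms \<open>z = d u v\<close> unfolding metric_on_def by metis
  qed
  then show ?thesis unfolding w_def using someI_ex[OF ex] by blast
qed

lemma finite_trees:
  assumes "finite V"
  shows "finite {t. steiner_tree V T t}"
proof -
  have "{t. steiner_tree V T t} \<subseteq> Pow V \<times> Pow (Pow V)"
  proof
    fix t assume "t \<in> {t. steiner_tree V T t}"
    then obtain A B where t: "t = (A,B)" "A \<subseteq> V" "B \<subseteq> edges_of A"
      unfolding steiner_tree_def is_tree_def by (cases t) auto
    have "edges_of A \<subseteq> Pow V" using t(2) unfolding edges_of_def by blast
    then show "t \<in> Pow V \<times> Pow (Pow V)" using t by blast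
  qed
  then show ?thesis using assms by (meson finite_Pow_iff finite_SigmaI finite_subset)
qed

lemma swap:
  assumes g: "\<gamma> \<ge> 1"
    and inst: "steiner_instance V T d"
    and gs: "gamma_stable \<gamma> V T d"
    and opt: "min_steiner V T (w d) (S, E)"
    and e: "{u,v} \<in> E" and pS: "p \<in> S" and qS: "q \<in> S" and pq: "p \<noteq> q" and f: "{p,q} \<notin> E"
    and up: "(u,p) \<in> (adj (E - {{u,v}}))\<^sup>*" and vq: "(v,q) \<in> (adj (E - {{u,v}}))\<^sup>*"
  shows "\<gamma> * d u v < d p q"
proof -
  define R where "R = (adj (E - {{u,v}}))\<^sup>*"
  define E' where "E' = insert {p,q} (E - {{u,v}})"
  have met: "metric_on V d" and finV: "finite V" using inst unfolding steiner_instance_def by auto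
  have tr: "S \<subseteq> V" "S \<noteq> {}" "E \<subseteq> edges_of S" "connected_graph S E" "acyclic_graph E" "T \<subseteq> S"
    using opt unfolding min_steiner_def steiner_tree_def is_tree_def by auto
  have uvS: "u \<in> S" "v \<in> S" "u \<noteq> v" using edge_facts[of u v S] e tr(3) by blast+
  have uv_notR: "(u,v) \<notin> R" using tr(5) e unfolding acyclic_graph_def R_def by blast
  have sub: "E - {{u,v}} \<subseteq> E'" unfolding E'_def by blast
  have pq_E': "(p,q) \<in> (adj E')\<^sup>*" using adj_I[of p q E'] pq unfolding E'_def by blast
  have adjE: "adj E \<subseteq> (adj E')\<^sup>*"
  proof
    fix z assume "z \<in> adj E"
    then obtain x y where z: "z = (x,y)" "{x,y} \<in> E" "x \<noteq> y" unfolding adj_def by blast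
    show "z \<in> (adj E')\<^sup>*"
    proof (cases "{x,y} = {u,v}")
      case False
      then have "{x,y} \<in> E'" using z unfolding E'_def by blast
      then show ?thesis using z adj_I by metis
    next
      case True
      have "(u,p) \<in> (adj E')\<^sup>*" using adj_mono[OF sub up] .
      moreover have "(q,v) \<in> (adj E')\<^sup>*" using adj_mono[OF sub R_sym[OF vq]] .
      ultimately have uv: "(u,v) \<in> (adj E')\<^sup>*" using pq_E' by (meson rtrancl_trans)
      have "(x = u \<and> y = v) \<or> (x = v \<and> y = u)" using True by (simp add: doubleton_eq_iff)
      moreover have "(v,u) \<in> (adj E')\<^sup>*" using R_sym[OF uv] .
      ultimately show ?thesis using uv z(1) by blast
    qed
  qed
  have conn: "connected_graph S E'"
    using tr(4) adjE unfolding connected_graph_def by (meson rtrancl_subset_rtrancl subsetD)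
  have acyc: "acyclic_graph E'"
    unfolding acyclic_graph_def
  proof (intro allI impI notI)
    fix x y assume xy: "{x,y} \<in> E'" and P: "(x,y) \<in> (adj (E' - {{x,y}}))\<^sup>*"
    show False
    proof (cases "{x,y} = {p,q}")
      case True
      have eq: "E' - {{x,y}} = E - {{u,v}}" unfolding E'_def True using f by blast
      have "(x = p \<and> y = q) \<or> (x = q \<and> y = p)" using True by (simp add: doubleton_eq_iff)
      moreover have "(x,y) \<in> R" using P eq unfolding R_def by simp
      ultimately have "(p,q) \<in> R" using R_sym unfolding R_def by metis
      moreover have "(q,v) \<in> R" unfolding R_def using R_sym[OF vq] .
      ultimately have "(u,v) \<in> R" using up unfolding R_def by (meson rtrancl_trans)
      then show False using uv_notR by blast
    next
      case False
      define F where "F = E - {{u,v}} - {{x,y}}"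
      have xyE: "{x,y} \<in> E - {{u,v}}" using xy False unfolding E'_def by blast
      have eq: "E' - {{x,y}} = insert {p,q} F" using False unfolding E'_def F_def by blast
      have FR: "F \<subseteq> E - {{u,v}}" unfolding F_def by blast
      have xyne: "x \<noteq> y" using xyE edge_facts[of x y S] tr(3) by blast
      have xyR1: "(x,y) \<in> R" unfolding R_def using adj_I[OF xyE xyne] .
      have xyR: "(x,y) \<in> R" "(y,x) \<in> R" using xyR1 R_sym[OF xyR1[unfolded R_def]] unfolding R_def by simp_all
      from split_path[of x y p q F] P eq
      have "(x,y) \<in> (adj F)\<^sup>* \<or> ((x,p) \<in> (adj F)\<^sup>* \<and> (q,y) \<in> (adj F)\<^sup>*)
         \<or> ((x,q) \<in> (adj F)\<^sup>* \<and> (p,y) \<in> (adj F)\<^sup>*)" by simp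
      then show False
      proof (elim disjE conjE)
        assume "(x,y) \<in> (adj F)\<^sup>*"
        then have "(x,y) \<in> (adj (E - {{x,y}}))\<^sup>*" using adj_mono[of F "E - {{x,y}}"] unfolding F_def by blast
        then show False using tr(5) xyE unfolding acyclic_graph_def by blast
      next
        assume a1: "(x,p) \<in> (adj F)\<^sup>*" and a2: "(q,y) \<in> (adj F)\<^sup>*"
        have px: "(p,x) \<in> R" unfolding R_def using adj_mono[OF FR R_sym[OF a1]] .
        have yq: "(y,q) \<in> R" unfolding R_def using adj_mono[OF FR R_sym[OF a2]] .
        have qv: "(q,v) \<in> R" unfolding R_def using R_sym[OF vq] .
        have "(u,v) \<in> R" using up[folded R_def] px xyR(1) yq qv unfolding R_def by (meson rtrancl_trans)
        then show False using uv_notR by blast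
      next
        assume a1: "(x,q) \<in> (adj F)\<^sup>*" and a2: "(p,y) \<in> (adj F)\<^sup>*"
        have py: "(p,y) \<in> R" unfolding R_def using adj_mono[OF FR a2] .
        have xq: "(x,q) \<in> R" unfolding R_def using adj_mono[OF FR a1] .
        have qv: "(q,v) \<in> R" unfolding R_def using R_sym[OF vq] .
        have "(u,v) \<in> R" using up[folded R_def] py xyR(2) xq qv unfolding R_def by (meson rtrancl_trans)
        then show False using uv_notR by blast
      qed
    qed
  qed
  have edgesE': "E' \<subseteq> edges_of S"
    using tr(3) pS qS pq unfolding E'_def edges_of_def by blast
  have st': "steiner_tree V T (S, E')"
    unfolding steiner_tree_def is_tree_def using tr conn acyc edgesE' by simp
  have neq: "(S, E') \<noteq> (S, E)" using f unfolding E'_def by blast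
  obtain OPT where O1: "min_steiner V T (w d) OPT"
    and O2: "\<And>w'. perturbation \<gamma> V d w' \<Longrightarrow> (\<forall>t. min_steiner V T w' t \<longrightarrow> t = OPT)"
    using gs unfolding gamma_stable_def by blast
  have wnn: "\<And>e. e \<in> edges_of V \<Longrightarrow> w d e \<ge> 0"
  proof -
    fix e assume "e \<in> edges_of V"
    then obtain x y where "e = {x,y}" "x \<in> V" "y \<in> V" unfolding edges_of_def by blast
    then show "w d e \<ge> 0" using w_eq[OF met] met unfolding metric_on_def by simp
  qed
  have wle: "\<And>e. e \<in> edges_of V \<Longrightarrow> w d e \<le> \<gamma> * w d e"
  proof -
    fix e assume "e \<in> edges_of V"
    then have "0 \<le> w d e" using wnn by blast
    then have "1 * w d e \<le> \<gamma> * w d e" using g by (rule mult_right_mono[rotated])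
    then show "w d e \<le> \<gamma> * w d e" by simp
  qed
  have "perturbation \<gamma> V d (w d)"
    unfolding perturbation_def using wle by simp
  then have "(S,E) = OPT" using O2 opt by blast
  define w' where "w' = (\<lambda>e. if e \<in> E then \<gamma> * w d e else w d e)"
  have pert: "perturbation \<gamma> V d w'"
    unfolding perturbation_def w'_def using wle by simp
  obtain t where t: "is_arg_min (tree_weight w') (\<lambda>x. x \<in> {t. steiner_tree V T t}) t"
    using ex_is_arg_min_if_finite[OF finite_trees[OF finV], of T "tree_weight w'"] st' by blast
  have tmin: "min_steiner V T w' t"
    using t unfolding is_arg_min_def min_steiner_def by (auto simp: not_less)
  then have "t = (S,E)" using O2[OF pert] \<open>(S,E) = OPT\<close> by blast
  then have le: "tree_weight w' (S,E) \<le> tree_weight w' (S,E')"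
    using tmin st' unfolding min_steiner_def by blast
  have strict: "tree_weight w' (S,E) < tree_weight w' (S,E')"
  proof (rule ccontr)
    assume "\<not> ?thesis"
    then have "tree_weight w' (S,E') = tree_weight w' (S,E)" using le by simp
    then have "min_steiner V T w' (S,E')" using tmin \<open>t = (S,E)\<close> st' unfolding min_steiner_def by simp
    then have "(S,E') = OPT" using O2[OF pert] by blast
    then show False using neq \<open>(S,E) = OPT\<close> by simp
  qed
  have "edges_of S \<subseteq> Pow V" using tr(1) unfolding edges_of_def by blast
  then have finE: "finite E" using tr(3) finV by (meson finite_Pow_iff finite_subset order_trans)
  have s1: "tree_weight w' (S,E) = w' {u,v} + sum w' (E - {{u,v}})"
    unfolding tree_weight_def using finE e by (simp add: sum.remove)
  have s2: "tree_weight w' (S,E') = w' {p,q} + sum w' (E - {{u,v}})"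
    unfolding tree_weight_def E'_def using finE f by simp
  have V4: "u \<in> V" "v \<in> V" "p \<in> V" "q \<in> V" using uvS pS qS tr(1) by blast+
  have "w' {u,v} = \<gamma> * d u v" unfolding w'_def using e w_eq[OF met V4(1,2)] by simp
  moreover have "w' {p,q} = d p q" unfolding w'_def using f w_eq[OF met V4(3,4)] by simp
  ultimately show ?thesis using strict s1 s2 by simp
qed


lemma twopath:
  assumes g: "\<gamma> \<ge> 1"
    and inst: "steiner_instance V T d"
    and gs: "gamma_stable \<gamma> V T d"
    and opt: "min_steiner V T (w d) (S, E)"
    and xy: "{x,y} \<in> E" and yz: "{y,z} \<in> E" and xz: "x \<noteq> z"
  shows "\<gamma> * d x y < d x z \<and> \<gamma> * d y z < d x z"
proof -
  have tr: "E \<subseteq> edges_of S" "acyclic_graph E"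
    using opt unfolding min_steiner_def steiner_tree_def is_tree_def by auto
  have f1: "x \<in> S" "y \<in> S" "x \<noteq> y" using edge_facts[of x y S] xy tr(1) by blast+
  have f2: "z \<in> S" "y \<noteq> z" using edge_facts[of y z S] yz tr(1) by blast+
  have ne1: "{y,z} \<noteq> {x,y}" using xz f2 by (auto simp: doubleton_eq_iff)
  have ne2: "{x,y} \<noteq> {x,z}" using xz f1 f2 by (auto simp: doubleton_eq_iff)
  have ne3: "{y,z} \<noteq> {x,z}" using xz f1 f2 by (auto simp: doubleton_eq_iff)
  have nxz: "{x,z} \<notin> E"
  proof
    assume a: "{x,z} \<in> E"
    have "{x,y} \<in> E - {{x,z}}" using xy ne2 by blast
    then have r1: "(x,y) \<in> (adj (E - {{x,z}}))\<^sup>*" using adj_I f1(3) by metis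
    have "{y,z} \<in> E - {{x,z}}" using yz ne3 by blast
    then have r2: "(y,z) \<in> (adj (E - {{x,z}}))\<^sup>*" using adj_I f2(2) by metis
    have "(x,z) \<in> (adj (E - {{x,z}}))\<^sup>*" using r1 r2 by (rule rtrancl_trans)
    then show False using tr(2) a unfolding acyclic_graph_def by blast
  qed
  have "{y,z} \<in> E - {{x,y}}" using yz ne1 by blast
  then have "(y,z) \<in> (adj (E - {{x,y}}))\<^sup>*" using adj_I f2(2) by metis
  then have A: "\<gamma> * d x y < d x z"
    using swap[OF g inst gs opt xy f1(1) f2(1) xz nxz rtrancl.rtrancl_refl] by blast
  have "{x,y} \<in> E - {{y,z}}" using xy ne1 by blast
  then have "(y,x) \<in> (adj (E - {{y,z}}))\<^sup>*" using adj_I[of y x] f1(3) by (metis insert_commute)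
  then have B: "\<gamma> * d y z < d x z"
    using swap[OF g inst gs opt yz f1(1) f2(1) xz nxz _ rtrancl.rtrancl_refl] by blast
  show ?thesis using A B by blast
qed


theorem mainTheorem3:
  fixes \<gamma> :: real and V T :: "'a set" and d :: "'a \<Rightarrow> 'a \<Rightarrow> real"
    and S SH :: "'a set" and E EH :: "'a set set" and a b c :: 'a
  assumes "\<gamma> > 1"
    and "steiner_instance V T d"
    and "gamma_stable \<gamma> V T d"
    and "min_steiner V T (w d) (S, E)"
    and "SH \<subseteq> S" and "EH \<subseteq> E" and "EH \<subseteq> edges_of SH" and "EH \<noteq> {}"
    and "{a, b} \<in> EH"
    and "c \<in> S - SH"
    and "d b c < \<gamma> * (\<gamma> - 1) * d a b"
  shows "d b c < d a b / (\<gamma> - 1) \<and> d a b < d b c / (\<gamma> - 1)"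
proof -
  note inst = assms(2) and gs = assms(3) and opt = assms(4) and hyp = assms(11)
  have g: "\<gamma> \<ge> 1" using assms(1) by simp
  have met: "metric_on V d" using inst unfolding steiner_instance_def by simp
  have tr: "S \<subseteq> V" "E \<subseteq> edges_of S" "connected_graph S E" "acyclic_graph E"
    using opt unfolding min_steiner_def steiner_tree_def is_tree_def by auto
  have abE: "{a,b} \<in> E" using assms(6,9) by blast
  have abH: "{a,b} \<in> edges_of SH" using assms(7,9) by blast
  have abSH: "a \<in> SH" "b \<in> SH" "a \<noteq> b" using edge_facts[OF abH] by blast+
  have cS: "c \<in> S" and cSH: "c \<notin> SH" using assms(10) by blast+
  have ca: "c \<noteq> a" and cb: "c \<noteq> b" using abSH cSH by blast+
  have aS: "a \<in> S" and bS: "b \<in> S" using abSH assms(5) by blast+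
  have aV: "a \<in> V" and bV: "b \<in> V" and cV: "c \<in> V" using aS bS cS tr(1) by blast+
  have dsym: "\<And>x y. x \<in> V \<Longrightarrow> y \<in> V \<Longrightarrow> d x y = d y x" using met unfolding metric_on_def by blast
  have dtri: "\<And>x y z. x \<in> V \<Longrightarrow> y \<in> V \<Longrightarrow> z \<in> V \<Longrightarrow> d x z \<le> d x y + d y z"
    using met unfolding metric_on_def by blast
  have dpos: "\<And>x y. x \<in> V \<Longrightarrow> y \<in> V \<Longrightarrow> x \<noteq> y \<Longrightarrow> d x y > 0"
    using met unfolding metric_on_def by (metis order_le_less)
  have dab: "d a b > 0" using dpos aV bV abSH(3) by blast
  define R where "R = (adj (E - {{a,b}}))\<^sup>*"
  have abnR: "(a,b) \<notin> R" using tr(4) abE unfolding acyclic_graph_def R_def by blast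
  have "(c,a) \<in> (adj E)\<^sup>*" using tr(3) cS aS unfolding connected_graph_def by blast
  moreover have "E = insert {a,b} (E - {{a,b}})" using abE by blast
  ultimately have "(c,a) \<in> (adj (insert {a,b} (E - {{a,b}})))\<^sup>*" by simp
  from split_path[OF this] have side: "(c,a) \<in> R \<or> (c,b) \<in> R" unfolding R_def by blast
  show ?thesis
  proof (cases "(c,a) \<in> R")
    case True
    (* c on a's side: contradiction *)
    from first_step[of "E - {{a,b}}" E c a] True ca
    obtain y where y: "{a,y} \<in> E - {{a,b}}" unfolding R_def by blast
    have yE: "{y,a} \<in> E" using y by (simp add: insert_commute)
    have ySV: "y \<in> S" using edge_facts[of a y S] y tr(2) by blast
    then have yV: "y \<in> V" using tr(1) by blast
    have yb: "y \<noteq> b" using y by blast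
    from twopath[OF g inst gs opt yE abE yb]
    have t1: "\<gamma> * d y a < d y b" "\<gamma> * d a b < d y b" by blast+
    have t2: "d y b \<le> d y a + d a b" using dtri yV aV bV by blast
    have dya: "d y a \<ge> 0" using met yV aV unfolding metric_on_def by blast
    have glt2: "\<gamma> < 2"
    proof (rule ccontr)
      assume "\<not> \<gamma> < 2"
      then have "\<gamma> - 1 \<ge> 1" by simp
      then have "1 * d y a \<le> (\<gamma> - 1) * d y a" "1 * d a b \<le> (\<gamma> - 1) * d a b" using dya dab
        by (intro mult_right_mono; simp)+
      then have "2 * d y a \<le> \<gamma> * d y a" "2 * d a b \<le> \<gamma> * d a b" by (simp_all add: algebra_simps)
      then show False using t1 t2 by linarith
    qed
    have cbnE: "{c,b} \<notin> E"
    proof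
      assume "{c,b} \<in> E"
      then have "{c,b} \<in> E - {{a,b}}" using ca by (auto simp: doubleton_eq_iff)
      then have "(c,b) \<in> R" unfolding R_def using adj_I cb by metis
      moreover have "(a,c) \<in> R" unfolding R_def using R_sym[OF True[unfolded R_def]] .
      ultimately have "(a,b) \<in> R" unfolding R_def using rtrancl_trans by metis
      then show False using abnR by blast
    qed
    have "(a,c) \<in> (adj (E - {{a,b}}))\<^sup>*" using R_sym[OF True[unfolded R_def]] .
    from swap[OF g inst gs opt abE cS bS cb cbnE this rtrancl.rtrancl_refl]
    have "\<gamma> * d a b < d c b" .
    then have "\<gamma> * d a b < \<gamma> * (\<gamma> - 1) * d a b" using hyp dsym[OF bV cV] by simp
    then have "1 < \<gamma> - 1" using dab assms(1) by (simp add: mult.assoc)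
    then show ?thesis using glt2 by simp
  next
    case False
    then have cbR: "(c,b) \<in> R" using side by blast
    have baE: "{b,a} \<in> E" using abE by (simp add: insert_commute)
    have caE: "{c,a} \<notin> E"
    proof
      assume "{c,a} \<in> E"
      then have "{c,a} \<in> E - {{a,b}}" using cb by (auto simp: doubleton_eq_iff)
      then have "(c,a) \<in> R" unfolding R_def using adj_I ca by metis
      then show False using False by blast
    qed
    have "(b,c) \<in> (adj (E - {{b,a}}))\<^sup>*" using R_sym[OF cbR[unfolded R_def]] by (simp add: insert_commute)
    from swap[OF g inst gs opt baE cS aS ca caE this rtrancl.rtrancl_refl]
    have s1: "\<gamma> * d b a < d c a" .
    have tri1: "d a c \<le> d a b + d b c" using dtri aV bV cV by blast
    have "(\<gamma> - 1) * d a b < d b c" using s1 tri1 dsym[OF aV bV] dsym[OF aV cV] by (simp add: algebra_simps)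
    then have second: "d a b < d b c / (\<gamma> - 1)" using assms(1) by (simp add: pos_less_divide_eq mult.commute)
    have first: "d b c < d a b / (\<gamma> - 1)"
    proof (cases "{b,c} \<in> E")
      case True
      from twopath[OF g inst gs opt abE True ca[symmetric]]
      have "\<gamma> * d b c < d a c" by blast
      then have "(\<gamma> - 1) * d b c < d a b" using tri1 by (simp add: algebra_simps)
      then show ?thesis using assms(1) by (simp add: pos_less_divide_eq mult.commute)
    next
      case bcnE: False
      from first_step[of "E - {{a,b}}" E c b] cbR cb
      obtain x where x: "{b,x} \<in> E - {{a,b}}" "(x,c) \<in> (adj (E - {{b,x}}))\<^sup>*" unfolding R_def by blast
      have xa: "a \<noteq> x" using x(1) by (auto simp: insert_commute)
      have bxE: "{b,x} \<in> E" using x(1) by blast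
      have xS: "x \<in> S" using edge_facts[of b x S] bxE tr(2) by blast
      then have xV: "x \<in> V" using tr(1) by blast
      from twopath[OF g inst gs opt abE bxE xa]
      have "\<gamma> * d a b < d a x" by blast
      moreover have "d a x \<le> d a b + d b x" using dtri aV bV xV by blast
      ultimately have l1: "(\<gamma> - 1) * d a b < d b x" by (simp add: algebra_simps)
      have xbE: "{x,b} \<in> E" using bxE by (simp add: insert_commute)
      have x2: "(x,c) \<in> (adj (E - {{x,b}}))\<^sup>*" using x(2) by (simp add: insert_commute)
      have cbnE: "{c,b} \<notin> E" using bcnE by (simp add: insert_commute)
      from swap[OF g inst gs opt xbE cS bS cb cbnE x2 rtrancl.rtrancl_refl]
      have "\<gamma> * d x b < d c b" .
      then have l2: "\<gamma> * d b x < d b c" using dsym[OF xV bV] dsym[OF cV bV] by simp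
      have "\<gamma> * ((\<gamma> - 1) * d a b) \<le> \<gamma> * d b x" using l1 assms(1) by simp
      then have "\<gamma> * (\<gamma> - 1) * d a b < d b c" using l2 by (simp add: mult.assoc)
      then show ?thesis using hyp by simp
    qed
    show ?thesis using first second by blast
  qed
qed

end
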